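(* Let $N\ge 2$, let $T_N$ be the homogeneous tree in which every vertex has degree $N$, and fix a root $o$. Let $m>1$ and assume either $(p,q)\in G_{5.1}=\{(p,q): p+q=m-1,\ p\ge0,\ q>0\}$, or $(p,q)\in G_{5.2}=\{(p,q): p+q=m-1,\ q<0\}$ with $1<m<3$. Then there exist $\lambda>0$ and a weight $\mu$ on $T_N$ such that $$W_o(n)\asymp e^{\lambda n}\quad\text{for } n\ge 2,$$ and the inequality $\Delta_m u+u^p|\nabla u|^q\le 0$ on $T_N$ admits a nontrivial positive solution.
   Context: A weight on a graph $(V,E)$ is a symmetric function $\mu:V\times V\to[0,\infty)$ with $\mu_{xy}=\mu_{yx}>0$ if and only if $x\sim y$ (adjacent); $\mu(x)=\sum_{y\sim x}\mu_{xy}$. For $m>1$, $\Delta_m u(x)=\frac{1}{\mu(x)}\sum_{y\sim x}\mu_{xy}|u(y)-u(x)|^{m-2}(u(y)-u(x))$ and $|\nabla u(x)|=\big(\sum_{y\sim x}\frac{\mu_{xy}}{2\mu(x)}(u(y)-u(x))^2\big)^{1/2}$. $d$ is the graph distance, $B(o,n)=\{x: d(o,x)\le n\}$, $W_o(n)=\sum_{x\in B(o,n),\,y\in V,\,d(o,x)<d(o,y)}\mu_{xy}$. $f(n)\asymp g(n)$ for $n\ge2$ means there are constants $c,C>0$ with $c\,g(n)\le f(n)\le C\,g(n)$ for all $n\ge 2$. A nontrivial positive solution is a non-constant $u:V\to(0,\infty)$ with $\Delta_m u(x)+u(x)^p|\nabla u(x)|^q\le0$ for all $x\in V$. *)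

theory Defs
  imports Complex_Main
begin

definition nbrs :: "'v set \<Rightarrow> ('v \<Rightarrow> 'v \<Rightarrow> bool) \<Rightarrow> 'v \<Rightarrow> 'v set" where
  "nbrs V adj x = {y \<in> V. adj x y}"

definition is_weight :: "'v set \<Rightarrow> ('v \<Rightarrow> 'v \<Rightarrow> bool) \<Rightarrow> ('v \<Rightarrow> 'v \<Rightarrow> real) \<Rightarrow> bool" where
  "is_weight V adj \<mu> \<longleftrightarrow>
     (\<forall>x\<in>V. \<forall>y\<in>V. \<mu> x y = \<mu> y x \<and> \<mu> x y \<ge> 0 \<and> (\<mu> x y > 0 \<longleftrightarrow> adj x y))"

definition vmeasure :: "'v set \<Rightarrow> ('v \<Rightarrow> 'v \<Rightarrow> bool) \<Rightarrow> ('v \<Rightarrow> 'v \<Rightarrow> real) \<Rightarrow> 'v \<Rightarrow> real" where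
  "vmeasure V adj \<mu> x = (\<Sum>y\<in>nbrs V adj x. \<mu> x y)"

text \<open>m-Laplacian; the factor |t|^(m-2) t is read as 0 when t = 0 (note 0 powr a = 0).\<close>
definition m_laplacian ::
  "'v set \<Rightarrow> ('v \<Rightarrow> 'v \<Rightarrow> bool) \<Rightarrow> ('v \<Rightarrow> 'v \<Rightarrow> real) \<Rightarrow> real \<Rightarrow> ('v \<Rightarrow> real) \<Rightarrow> 'v \<Rightarrow> real" where
  "m_laplacian V adj \<mu> m u x =
     (1 / vmeasure V adj \<mu> x) *
     (\<Sum>y\<in>nbrs V adj x. \<mu> x y * (\<bar>u y - u x\<bar> powr (m - 2) * (u y - u x)))"

definition grad_norm ::
  "'v set \<Rightarrow> ('v \<Rightarrow> 'v \<Rightarrow> bool) \<Rightarrow> ('v \<Rightarrow> 'v \<Rightarrow> real) \<Rightarrow> ('v \<Rightarrow> real) \<Rightarrow> 'v \<Rightarrow> real" where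
  "grad_norm V adj \<mu> u x =
     sqrt (\<Sum>y\<in>nbrs V adj x. \<mu> x y / (2 * vmeasure V adj \<mu> x) * (u y - u x)\<^sup>2)"

definition gdist :: "('v \<Rightarrow> 'v \<Rightarrow> bool) \<Rightarrow> 'v \<Rightarrow> 'v \<Rightarrow> nat" where
  "gdist adj x y = (LEAST n. (adj ^^ n) x y)"

definition W_fun ::
  "'v set \<Rightarrow> ('v \<Rightarrow> 'v \<Rightarrow> bool) \<Rightarrow> ('v \<Rightarrow> 'v \<Rightarrow> real) \<Rightarrow> 'v \<Rightarrow> nat \<Rightarrow> real" where
  "W_fun V adj \<mu> r n =
     (\<Sum>(x, y)\<in>{(x, y). x \<in> V \<and> y \<in> V \<and> adj x y \<and> gdist adj r x \<le> n
                        \<and> gdist adj r x < gdist adj r y}. \<mu> x y)"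

text \<open>Nontrivial positive solution of  \<Delta>_m u + u^p |\<nabla>u|^q \<le> 0.
  If q < 0, the term |\<nabla>u|^q is only finite when the gradient is nonzero,
  so this is required explicitly.\<close>
definition nontrivial_pos_solution ::
  "'v set \<Rightarrow> ('v \<Rightarrow> 'v \<Rightarrow> bool) \<Rightarrow> ('v \<Rightarrow> 'v \<Rightarrow> real) \<Rightarrow> real \<Rightarrow> real \<Rightarrow> real \<Rightarrow> ('v \<Rightarrow> real) \<Rightarrow> bool" where
  "nontrivial_pos_solution V adj \<mu> m p q u \<longleftrightarrow>
     (\<forall>x\<in>V. u x > 0) \<and> (\<exists>x\<in>V. \<exists>y\<in>V. u x \<noteq> u y) \<and>
     (\<forall>x\<in>V. (q < 0 \<longrightarrow> grad_norm V adj \<mu> u x > 0) \<and>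
        m_laplacian V adj \<mu> m u x + u x powr p * grad_norm V adj \<mu> u x powr q \<le> 0)"

text \<open>Vertices: words; the empty word, or words whose first letter is < N and
  whose further letters are < N - 1. Edges: x -- x @ [a]. Every vertex has degree N.\<close>
definition TN_verts :: "nat \<Rightarrow> nat list set" where
  "TN_verts N = {xs. xs = [] \<or> (hd xs < N \<and> (\<forall>a\<in>set (tl xs). a < N - 1))}"

definition TN_adj :: "nat \<Rightarrow> nat list \<Rightarrow> nat list \<Rightarrow> bool" where
  "TN_adj N x y \<longleftrightarrow> x \<in> TN_verts N \<and> y \<in> TN_verts N \<and>
     ((\<exists>a. y = x @ [a]) \<or> (\<exists>a. x = y @ [a]))"

end

theory Submission
  imports Defs
begin


abbreviation "V N \<equiv> TN_verts N"

definition letters :: "nat \<Rightarrow> nat list \<Rightarrow> nat set" where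
  "letters N y = {..<(if y = [] then N else N - 1)}"

lemma child_in_V: "y \<in> TN_verts N \<Longrightarrow> (y @ [a] \<in> TN_verts N) = (a \<in> letters N y)"
  by (cases y) (auto simp: TN_verts_def letters_def)

lemma butlast_in_V: "y \<in> TN_verts N \<Longrightarrow> butlast y \<in> TN_verts N"
  by (cases y) (auto simp: TN_verts_def dest: in_set_butlastD)

lemma adj_iff: "TN_adj N x y \<longleftrightarrow> x \<in> TN_verts N \<and> y \<in> TN_verts N \<and> ((x \<noteq> [] \<and> y = butlast x) \<or> (y \<noteq> [] \<and> x = butlast y))"
  unfolding TN_adj_def
  by (metis append_butlast_last_id butlast_snoc snoc_eq_iff_butlast)

lemma adj_sym: "TN_adj N x y = TN_adj N y x"
  unfolding TN_adj_def by auto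

lemma adj_len: "TN_adj N x y \<Longrightarrow> length y = Suc (length x) \<or> length x = Suc (length y)"
  unfolding TN_adj_def by auto

lemma nbrs_eq: "x \<in> TN_verts N \<Longrightarrow> nbrs (TN_verts N) (TN_adj N) x =
   (\<lambda>a. x @ [a]) ` letters N x \<union> (if x = [] then {} else {butlast x})"
proof (rule set_eqI)
  fix y assume x: "x \<in> TN_verts N"
  have 1: "(y \<in> TN_verts N \<and> y \<noteq> [] \<and> x = butlast y) \<longleftrightarrow> (\<exists>a\<in>letters N x. y = x @ [a])"
  proof
    assume h: "y \<in> TN_verts N \<and> y \<noteq> [] \<and> x = butlast y"
    then have "y = x @ [last y]" by simp
    then show "\<exists>a\<in>letters N x. y = x @ [a]" using h child_in_V[OF x, of "last y"] by metis
  next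
    assume "\<exists>a\<in>letters N x. y = x @ [a]"
    then show "y \<in> TN_verts N \<and> y \<noteq> [] \<and> x = butlast y" using child_in_V[OF x] by auto
  qed
  show "y \<in> nbrs (TN_verts N) (TN_adj N) x \<longleftrightarrow> y \<in> (\<lambda>a. x @ [a]) ` letters N x \<union> (if x = [] then {} else {butlast x})"
    unfolding nbrs_def adj_iff using 1 x butlast_in_V[OF x] by auto
qed

lemma walk_len: "(TN_adj N ^^ n) x y \<Longrightarrow> length y \<le> length x + n \<and> length x \<le> length y + n"
proof (induction n arbitrary: y)
  case 0 then show ?case by (auto elim: relpowp_0_E)
next
  case (Suc n)
  from Suc.prems obtain z where "(TN_adj N ^^ n) x z" "TN_adj N z y" by (rule relpowp_Suc_E)
  with Suc.IH[of z] adj_len[of N z y] show ?case by auto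
qed

lemma walk_desc: "r @ w \<in> TN_verts N \<Longrightarrow> (TN_adj N ^^ length w) r (r @ w)"
proof (induction w rule: rev_induct)
  case Nil then show ?case by (simp add: relpowp_0_I)
next
  case (snoc a w)
  have "r @ w \<in> TN_verts N" using butlast_in_V[OF snoc.prems] by (metis append_assoc butlast_snoc)
  moreover have "TN_adj N (r @ w) (r @ w @ [a])" using snoc.prems calculation unfolding TN_adj_def by auto
  ultimately show ?case using snoc.IH relpowp_Suc_I by fastforce
qed

lemma walk_up: "x \<in> TN_verts N \<Longrightarrow> (TN_adj N ^^ length x) x []"
proof (induction x rule: rev_induct)
  case Nil then show ?case by (simp add: relpowp_0_I)
next
  case (snoc a w)
  have "w \<in> TN_verts N" using butlast_in_V[OF snoc.prems] by simp
  moreover have "TN_adj N (w @ [a]) w" using snoc.prems calculation unfolding TN_adj_def by auto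
  ultimately show ?case using snoc.IH relpowp_Suc_I2 by fastforce
qed

lemma walk_ex: "x \<in> TN_verts N \<Longrightarrow> y \<in> TN_verts N \<Longrightarrow> (TN_adj N ^^ (length x + length y)) x y"
  using relpowp_trans[OF walk_up[of x N] walk_desc[of "[]" y N]] by simp

lemma gdist_walk: "x \<in> TN_verts N \<Longrightarrow> y \<in> TN_verts N \<Longrightarrow> (TN_adj N ^^ gdist (TN_adj N) x y) x y"
  unfolding gdist_def by (rule LeastI, rule walk_ex)

lemma gdist_len: "x \<in> TN_verts N \<Longrightarrow> y \<in> TN_verts N \<Longrightarrow> length y \<le> length x + gdist (TN_adj N) x y"
  using walk_len[OF gdist_walk] by blast

lemma gdist_desc: "r @ w \<in> TN_verts N \<Longrightarrow> gdist (TN_adj N) r (r @ w) = length w"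
  unfolding gdist_def
  apply (rule Least_equality)
   apply (rule walk_desc, assumption)
  using walk_len by fastforce



definition ri :: "nat \<Rightarrow> nat list \<Rightarrow> nat" where
  "ri e z = (if z = [] then 0 else if hd z \<noteq> e then 0 else Suc (length (takeWhile (\<lambda>c. c = 0) (tl z))))"

definition rl :: "nat \<Rightarrow> nat list \<Rightarrow> nat" where
  "rl e y = (if y = [] then e else 0)"

lemma ri_le: "ri e z \<le> length z"
proof -
  have "length (takeWhile (\<lambda>c. c = 0) (tl z)) \<le> length (tl z)" by (rule length_takeWhile_le)
  then show ?thesis unfolding ri_def by (cases z) auto
qed

lemma ri_Nil[simp]: "ri e [] = 0" by (simp add: ri_def)

lemma ri_snoc: "ri e (y @ [a]) = (if ri e y = length y \<and> a = rl e y then Suc (ri e y) else ri e y)"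
proof (cases y)
  case Nil then show ?thesis by (simp add: ri_def rl_def)
next
  case (Cons c ys)
  show ?thesis
  proof (cases "c = e")
    case False then show ?thesis using Cons by (simp add: ri_def rl_def)
  next
    case True
    show ?thesis
    proof (cases "\<forall>x\<in>set ys. x = 0")
      case True
      then have tw: "takeWhile (\<lambda>c. c = 0) ys = ys" by (simp add: takeWhile_eq_all_conv)
      have nb: "\<not> (\<exists>x\<in>set ys. 0 < x)" using True by auto
      show ?thesis using Cons \<open>c = e\<close> by (simp add: ri_def rl_def takeWhile_append tw nb)
    next
      case False
      have "length (takeWhile (\<lambda>c. c = 0) ys) \<noteq> length ys"
      proof
        assume "length (takeWhile (\<lambda>c. c = 0) ys) = length ys"
        then have "takeWhile (\<lambda>c. c = 0) ys = ys" by (metis takeWhile_eq_take take_all order_refl)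
        then have "\<forall>x\<in>set ys. x = 0" by (metis set_takeWhileD)
        then show False using False by simp
      qed
      then have "length (takeWhile (\<lambda>c. c = 0) ys) < length ys"
        using length_takeWhile_le[of "\<lambda>c. c = 0" ys] by linarith
      moreover from False obtain x where "x \<in> set ys" "x \<noteq> 0" by auto
      then have "takeWhile (\<lambda>c. c = 0) (ys @ [a]) = takeWhile (\<lambda>c. c = 0) ys"
        by (rule takeWhile_append1)
      ultimately
      show ?thesis using Cons \<open>c = e\<close> by (simp add: ri_def rl_def)
    qed
  qed
qed

lemma ri_off_snoc: "ri e y < length y \<Longrightarrow> ri e (y @ [a]) = ri e y"
  by (simp add: ri_snoc)

lemma ri_off_app: "ri e y < length y \<Longrightarrow> ri e (y @ w) = ri e y"
proof (induction w rule: rev_induct)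
  case (snoc x xs)
  then have "ri e (y @ xs) < length (y @ xs)" by simp
  then show ?case using snoc ri_off_snoc[of e "y @ xs" x] by simp
qed simp

definition nu :: "nat \<Rightarrow> real \<Rightarrow> nat \<Rightarrow> nat list \<Rightarrow> real" where
  "nu N \<rho> e z = (if ri e z = length z then (1/\<rho>) ^ length z
      else (1/\<rho>) ^ ri e z * (\<rho> / real (N - 1)) ^ (length z - ri e z - 1) / real (N - 1))"

lemma nu_pos: "\<rho> > 0 \<Longrightarrow> N \<ge> 2 \<Longrightarrow> nu N \<rho> e z > 0"
  unfolding nu_def by auto

lemma nu_on: "ri e y = length y \<Longrightarrow> nu N \<rho> e y = (1/\<rho>) ^ length y"
  unfolding nu_def by simp

lemma nu_off_snoc: "ri e y < length y \<Longrightarrow> nu N \<rho> e (y @ [a]) = \<rho> / real (N - 1) * nu N \<rho> e y"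
proof -
  assume h: "ri e y < length y"
  then have r: "ri e (y @ [a]) = ri e y" by (rule ri_off_snoc)
  have "length (y @ [a]) - ri e y - 1 = Suc (length y - ri e y - 1)" using h by simp
  then show ?thesis unfolding nu_def using r h by simp
qed

lemma nu_on_snoc: "ri e y = length y \<Longrightarrow>
   nu N \<rho> e (y @ [a]) = (if a = rl e y then (1/\<rho>) ^ Suc (length y) else (1/\<rho>) ^ length y / real (N - 1))"
  unfolding nu_def by (simp add: ri_snoc)

definition uu :: "real \<Rightarrow> nat \<Rightarrow> nat list \<Rightarrow> real" where
  "uu A e z = A ^ (2 * ri e z) / A ^ length z"

lemma uu_pos: "A > 0 \<Longrightarrow> uu A e z > 0" unfolding uu_def by simp

lemma uu_snoc: "A > 0 \<Longrightarrow> uu A e (y @ [a]) = (if ri e y = length y \<and> a = rl e y then A * uu A e y else uu A e y / A)"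
  unfolding uu_def by (simp add: ri_snoc power_add field_simps)

lemma finite_letters[simp]: "finite (letters N y)" by (simp add: letters_def)

lemma card_letters: "card (letters N y) = (if y = [] then N else N - 1)"
  by (simp add: letters_def)

lemma rl_in: "e < N \<Longrightarrow> N \<ge> 2 \<Longrightarrow> rl e y \<in> letters N y"
  by (auto simp: rl_def letters_def)

lemma childsum_off: "ri e y < length y \<Longrightarrow> N \<ge> 2 \<Longrightarrow>
   (\<Sum>a\<in>letters N y. nu N \<rho> e (y @ [a])) = \<rho> * nu N \<rho> e y"
proof -
  assume h: "ri e y < length y" and N: "N \<ge> 2"
  then have "y \<noteq> []" by auto
  then have "(\<Sum>a\<in>letters N y. nu N \<rho> e (y @ [a])) = real (N - 1) * (\<rho> / real (N - 1) * nu N \<rho> e y)"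
    using nu_off_snoc[OF h] by (simp add: card_letters)
  also have "\<dots> = \<rho> * nu N \<rho> e y" using N by simp
  finally show ?thesis .
qed

lemma childsum_on: "ri e y = length y \<Longrightarrow> N \<ge> 2 \<Longrightarrow> e < N \<Longrightarrow> \<rho> \<ge> 2 \<Longrightarrow>
   (\<Sum>a\<in>letters N y. nu N \<rho> e (y @ [a])) \<le> \<rho> * nu N \<rho> e y"
proof -
  assume h: "ri e y = length y" and N: "N \<ge> 2" and e: "e < N" and r: "\<rho> \<ge> 2"
  let ?L = "letters N y"
  have rl: "rl e y \<in> ?L" by (rule rl_in[OF e N])
  have "(\<Sum>a\<in>?L. nu N \<rho> e (y @ [a])) = nu N \<rho> e (y @ [rl e y]) + (\<Sum>a\<in>?L - {rl e y}. nu N \<rho> e (y @ [a]))"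
    by (rule sum.remove[OF finite_letters rl])
  also have "(\<Sum>a\<in>?L - {rl e y}. nu N \<rho> e (y @ [a])) = real (card ?L - 1) * ((1/\<rho>) ^ length y / real (N - 1))"
    using nu_on_snoc[OF h] rl by (simp add: card_Diff_singleton)
  also have "\<dots> \<le> real (N - 1) * ((1/\<rho>) ^ length y / real (N - 1))"
    using r by (intro mult_right_mono) (auto simp: card_letters)
  also have "\<dots> = (1/\<rho>) ^ length y" using N by simp
  also have "nu N \<rho> e (y @ [rl e y]) = (1/\<rho>) * (1/\<rho>) ^ length y" using nu_on_snoc[OF h] by simp
  finally have "(\<Sum>a\<in>?L. nu N \<rho> e (y @ [a])) \<le> (1/\<rho> + 1) * (1/\<rho>) ^ length y" by (simp add: algebra_simps)
  also have "\<dots> \<le> \<rho> * (1/\<rho>) ^ length y"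
  proof (rule mult_right_mono)
    have "1/\<rho> \<le> 1" using r by simp
    then show "1/\<rho> + 1 \<le> \<rho>" using r by linarith
  qed (use r in simp)
  finally show ?thesis using nu_on[OF h] by simp
qed



definition muw :: "nat \<Rightarrow> real \<Rightarrow> nat \<Rightarrow> nat list \<Rightarrow> nat list \<Rightarrow> real" where
  "muw N \<rho> e x y = (if TN_adj N x y then (if length x < length y then nu N \<rho> e y else nu N \<rho> e x) else 0)"

definition Lv :: "nat \<Rightarrow> nat \<Rightarrow> nat list set" where
  "Lv N l = {z \<in> TN_verts N. length z = l}"

definition Zl :: "nat \<Rightarrow> nat \<Rightarrow> nat list set" where
  "Zl N l = {z \<in> TN_verts N. length z \<le> l}"

definition Dv :: "nat \<Rightarrow> nat list \<Rightarrow> nat \<Rightarrow> nat list set" where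
  "Dv N b k = {z \<in> TN_verts N. \<exists>w. z = b @ w \<and> length w = k}"

lemma V_set: "z \<in> TN_verts N \<Longrightarrow> set z \<subseteq> {..<N}"
  by (cases z) (auto simp: TN_verts_def)

lemma finite_Zl: "finite (Zl N l)"
proof (rule finite_subset)
  show "Zl N l \<subseteq> {xs. set xs \<subseteq> {..<N} \<and> length xs \<le> l}" using V_set by (auto simp: Zl_def)
  show "finite {xs. set xs \<subseteq> {..<N} \<and> length xs \<le> l}" by (rule finite_lists_length_le) simp
qed

lemma finite_Lv: "finite (Lv N l)"
  by (rule finite_subset[OF _ finite_Zl[of N l]]) (auto simp: Lv_def Zl_def)

lemma finite_Dv: "finite (Dv N b k)"
  by (rule finite_subset[OF _ finite_Zl[of N "length b + k"]]) (auto simp: Dv_def Zl_def)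

lemma snoc_inj: "inj_on (\<lambda>(y, a). y @ [a]) A"
  by (auto simp: inj_on_def)

lemma Lv_Suc: "Lv N (Suc l) = (\<lambda>(y, a). y @ [a]) ` (SIGMA y:Lv N l. letters N y)"
proof (rule set_eqI)
  fix z
  show "z \<in> Lv N (Suc l) \<longleftrightarrow> z \<in> (\<lambda>(y, a). y @ [a]) ` (SIGMA y:Lv N l. letters N y)"
  proof
    assume z: "z \<in> Lv N (Suc l)"
    then have zV: "z \<in> TN_verts N" and zl: "length z = Suc l" by (auto simp: Lv_def)
    then have ne: "z \<noteq> []" by auto
    have bV: "butlast z \<in> TN_verts N" using butlast_in_V[OF zV] .
    have eq: "z = butlast z @ [last z]" using ne by simp
    then have "last z \<in> letters N (butlast z)" using child_in_V[OF bV, of "last z"] zV by simp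
    moreover have "butlast z \<in> Lv N l" using bV zl by (simp add: Lv_def)
    ultimately show "z \<in> (\<lambda>(y, a). y @ [a]) ` (SIGMA y:Lv N l. letters N y)"
      using eq by (intro image_eqI[of _ _ "(butlast z, last z)"]) auto
  next
    assume "z \<in> (\<lambda>(y, a). y @ [a]) ` (SIGMA y:Lv N l. letters N y)"
    then obtain y a where "y \<in> Lv N l" "a \<in> letters N y" "z = y @ [a]" by auto
    then show "z \<in> Lv N (Suc l)" using child_in_V[of y N a] by (auto simp: Lv_def)
  qed
qed

lemma Dv_Suc: "b \<noteq> [] \<Longrightarrow> Dv N b (Suc k) = (\<lambda>(y, a). y @ [a]) ` (SIGMA y:Dv N b k. letters N y)"
proof (rule set_eqI)
  fix z assume bne: "b \<noteq> []"
  show "z \<in> Dv N b (Suc k) \<longleftrightarrow> z \<in> (\<lambda>(y, a). y @ [a]) ` (SIGMA y:Dv N b k. letters N y)"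
  proof
    assume z: "z \<in> Dv N b (Suc k)"
    then obtain w where zV: "z \<in> TN_verts N" and zw: "z = b @ w" and wl: "length w = Suc k" by (auto simp: Dv_def)
    then have ne: "w \<noteq> []" by auto
    have bV: "butlast z \<in> TN_verts N" using butlast_in_V[OF zV] .
    have eq: "z = butlast z @ [last z]" using ne zw by (metis append_butlast_last_id append_is_Nil_conv)
    then have "last z \<in> letters N (butlast z)" using child_in_V[OF bV, of "last z"] zV by simp
    moreover have "butlast z \<in> Dv N b k" using bV zw wl ne
      unfolding Dv_def by (auto intro!: exI[of _ "butlast w"] simp: butlast_append)
    ultimately show "z \<in> (\<lambda>(y, a). y @ [a]) ` (SIGMA y:Dv N b k. letters N y)"
      using eq by (intro image_eqI[of _ _ "(butlast z, last z)"]) auto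
  next
    assume "z \<in> (\<lambda>(y, a). y @ [a]) ` (SIGMA y:Dv N b k. letters N y)"
    then obtain y a where "y \<in> Dv N b k" "a \<in> letters N y" "z = y @ [a]" by auto
    then show "z \<in> Dv N b (Suc k)" using child_in_V[of y N a] by (auto simp: Dv_def)
  qed
qed

lemma sum_snoc: "finite A \<Longrightarrow> (\<Sum>z\<in>(\<lambda>(y, a). y @ [a]) ` (SIGMA y:A. letters N y). f z) = (\<Sum>y\<in>A. \<Sum>a\<in>letters N y. f (y @ [a]))"
  by (subst sum.reindex[OF snoc_inj]) (simp add: sum.Sigma split_def)

lemma childsum_le: "y \<in> TN_verts N \<Longrightarrow> N \<ge> 2 \<Longrightarrow> e < N \<Longrightarrow> \<rho> \<ge> 2 \<Longrightarrow>
   (\<Sum>a\<in>letters N y. nu N \<rho> e (y @ [a])) \<le> \<rho> * nu N \<rho> e y"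
  using childsum_on[of e y N \<rho>] childsum_off[of e y N \<rho>] ri_le[of e y]
  by (cases "ri e y = length y") auto

lemma Lv_bound: "N \<ge> 2 \<Longrightarrow> e < N \<Longrightarrow> \<rho> \<ge> 2 \<Longrightarrow> (\<Sum>z\<in>Lv N l. nu N \<rho> e z) \<le> \<rho> ^ l"
proof (induction l)
  case 0
  have "Lv N 0 = {[]}" by (auto simp: Lv_def TN_verts_def)
  then show ?case by (simp add: nu_def)
next
  case (Suc l)
  have "(\<Sum>z\<in>Lv N (Suc l). nu N \<rho> e z) = (\<Sum>y\<in>Lv N l. \<Sum>a\<in>letters N y. nu N \<rho> e (y @ [a]))"
    unfolding Lv_Suc by (rule sum_snoc[OF finite_Lv])
  also have "\<dots> \<le> (\<Sum>y\<in>Lv N l. \<rho> * nu N \<rho> e y)"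
    by (rule sum_mono, rule childsum_le) (use Suc.prems in \<open>auto simp: Lv_def\<close>)
  also have "\<dots> = \<rho> * (\<Sum>y\<in>Lv N l. nu N \<rho> e y)" by (simp add: sum_distrib_left)
  also have "\<dots> \<le> \<rho> * \<rho> ^ l" using Suc by (intro mult_left_mono) auto
  finally show ?case by simp
qed

lemma Zl_bound: "N \<ge> 2 \<Longrightarrow> e < N \<Longrightarrow> \<rho> \<ge> 2 \<Longrightarrow> (\<Sum>z\<in>Zl N l. nu N \<rho> e z) \<le> 2 * \<rho> ^ l"
proof (induction l)
  case 0
  have "Zl N 0 = {[]}" by (auto simp: Zl_def TN_verts_def)
  then show ?case by (simp add: nu_def)
next
  case (Suc l)
  have "Zl N (Suc l) = Zl N l \<union> Lv N (Suc l)" by (auto simp: Zl_def Lv_def)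
  moreover have "Zl N l \<inter> Lv N (Suc l) = {}" by (auto simp: Zl_def Lv_def)
  ultimately have "(\<Sum>z\<in>Zl N (Suc l). nu N \<rho> e z) = (\<Sum>z\<in>Zl N l. nu N \<rho> e z) + (\<Sum>z\<in>Lv N (Suc l). nu N \<rho> e z)"
    by (simp add: sum.union_disjoint finite_Zl finite_Lv)
  also have "\<dots> \<le> 2 * \<rho> ^ l + \<rho> ^ Suc l" using Suc Lv_bound[of N e \<rho> "Suc l"] by linarith
  also have "\<dots> \<le> 2 * \<rho> ^ Suc l"
  proof -
    have "2 * \<rho> ^ l \<le> \<rho> * \<rho> ^ l" using Suc.prems by (intro mult_right_mono) auto
    then show ?thesis by simp
  qed
  finally show ?case .
qed

lemma Dv_sum: "b \<in> TN_verts N \<Longrightarrow> ri e b < length b \<Longrightarrow> N \<ge> 2 \<Longrightarrow>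
    (\<Sum>z\<in>Dv N b k. nu N \<rho> e z) = \<rho> ^ k * nu N \<rho> e b"
proof (induction k)
  case 0
  have "Dv N b 0 = {b}" using 0 by (auto simp: Dv_def)
  then show ?case by simp
next
  case (Suc k)
  have bne: "b \<noteq> []" using Suc.prems by auto
  have "(\<Sum>z\<in>Dv N b (Suc k). nu N \<rho> e z) = (\<Sum>y\<in>Dv N b k. \<Sum>a\<in>letters N y. nu N \<rho> e (y @ [a]))"
    unfolding Dv_Suc[OF bne] by (rule sum_snoc[OF finite_Dv])
  also have "\<dots> = (\<Sum>y\<in>Dv N b k. \<rho> * nu N \<rho> e y)"
  proof (rule sum.cong[OF refl], rule childsum_off)
    fix y assume "y \<in> Dv N b k"
    then obtain w where "y = b @ w" by (auto simp: Dv_def)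
    then show "ri e y < length y" using ri_off_app[OF Suc.prems(2), of w] Suc.prems(2) by simp
  qed (use Suc.prems in auto)
  also have "\<dots> = \<rho> * (\<Sum>y\<in>Dv N b k. nu N \<rho> e y)" by (simp add: sum_distrib_left)
  finally show ?case using Suc by simp
qed



definition Sset :: "nat \<Rightarrow> nat list \<Rightarrow> nat \<Rightarrow> (nat list \<times> nat list) set" where
  "Sset N r n = {(x, y). x \<in> TN_verts N \<and> y \<in> TN_verts N \<and> TN_adj N x y \<and> gdist (TN_adj N) r x \<le> n
                        \<and> gdist (TN_adj N) r x < gdist (TN_adj N) r y}"

lemma W_eq: "W_fun (TN_verts N) (TN_adj N) \<mu> r n = (\<Sum>(x, y)\<in>Sset N r n. \<mu> x y)"
  unfolding W_fun_def Sset_def by simp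

lemma Sset_sub: "r \<in> TN_verts N \<Longrightarrow> Sset N r n \<subseteq> Zl N (length r + n + 1) \<times> Zl N (length r + n + 1)"
proof
  fix p assume r: "r \<in> TN_verts N" and p: "p \<in> Sset N r n"
  then obtain x y where pxy: "p = (x, y)" and xV: "x \<in> TN_verts N" and yV: "y \<in> TN_verts N"
     and a: "TN_adj N x y" and d: "gdist (TN_adj N) r x \<le> n" by (auto simp: Sset_def)
  have "length x \<le> length r + n" using gdist_len[OF r xV] d by linarith
  moreover have "length y \<le> length x + 1" using adj_len[OF a] by linarith
  ultimately show "p \<in> Zl N (length r + n + 1) \<times> Zl N (length r + n + 1)"
    using pxy xV yV by (auto simp: Zl_def)
qed

lemma finite_Sset: "r \<in> TN_verts N \<Longrightarrow> finite (Sset N r n)"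
  using Sset_sub finite_Zl by (metis finite_SigmaI finite_subset)

definition lg :: "nat list \<times> nat list \<Rightarrow> nat list" where
  "lg p = (if length (fst p) < length (snd p) then snd p else fst p)"

lemma lg_cases: "TN_adj N x y \<Longrightarrow> (x, y) = (lg (x, y), butlast (lg (x, y))) \<or> (x, y) = (butlast (lg (x, y)), lg (x, y))"
  unfolding adj_iff lg_def by auto

lemma W_upper: "N \<ge> 2 \<Longrightarrow> e < N \<Longrightarrow> \<rho> \<ge> 2 \<Longrightarrow> r \<in> TN_verts N \<Longrightarrow>
   W_fun (TN_verts N) (TN_adj N) (muw N \<rho> e) r n \<le> 2 * \<rho> ^ (length r + n + 1)"
proof -
  assume N: "N \<ge> 2" and e: "e < N" and rho: "\<rho> \<ge> 2" and r: "r \<in> TN_verts N"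
  let ?S = "Sset N r n"
  have "W_fun (TN_verts N) (TN_adj N) (muw N \<rho> e) r n = (\<Sum>p\<in>?S. nu N \<rho> e (lg p))"
    unfolding W_eq by (rule sum.cong) (auto simp: Sset_def muw_def lg_def)
  also have "\<dots> = (\<Sum>z\<in>lg ` ?S. nu N \<rho> e z)"
  proof -
    have "inj_on lg ?S"
    proof (rule inj_onI)
    fix p q assume p: "p \<in> ?S" and q: "q \<in> ?S" and eq: "lg p = lg q"
    obtain x y where pxy: "p = (x, y)" by force
    obtain x' y' where qxy: "q = (x', y')" by force
    have ap: "TN_adj N x y" and aq: "TN_adj N x' y'" using p q pxy qxy by (auto simp: Sset_def)
    have dp: "gdist (TN_adj N) r x < gdist (TN_adj N) r y" using p pxy by (auto simp: Sset_def)
    have dq: "gdist (TN_adj N) r x' < gdist (TN_adj N) r y'" using q qxy by (auto simp: Sset_def)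
    show "p = q" using lg_cases[OF ap] lg_cases[OF aq] eq pxy qxy dp dq by auto
  qed
  then show ?thesis by (simp add: sum.reindex)
  qed
  also have "\<dots> \<le> (\<Sum>z\<in>Zl N (length r + n + 1). nu N \<rho> e z)"
  proof (rule sum_mono2[OF finite_Zl])
    show "lg ` ?S \<subseteq> Zl N (length r + n + 1)"
      using Sset_sub[OF r, of n] by (force simp: lg_def)
    show "\<And>b. b \<in> Zl N (length r + n + 1) - lg ` ?S \<Longrightarrow> 0 \<le> nu N \<rho> e b"
      using nu_pos[of \<rho> N] rho N by (auto intro: less_imp_le)
  qed
  also have "\<dots> \<le> 2 * \<rho> ^ (length r + n + 1)" by (rule Zl_bound[OF N e rho])
  finally show ?thesis .
qed

lemma W_lower: "N \<ge> 2 \<Longrightarrow> \<rho> \<ge> 2 \<Longrightarrow> r \<in> TN_verts N \<Longrightarrow> ri e (r @ [0]) < length (r @ [0]) \<Longrightarrow>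
   \<rho> ^ n * nu N \<rho> e (r @ [0]) \<le> W_fun (TN_verts N) (TN_adj N) (muw N \<rho> e) r n"
proof -
  assume N: "N \<ge> 2" and rho: "\<rho> \<ge> 2" and r: "r \<in> TN_verts N" and off: "ri e (r @ [0]) < length (r @ [0])"
  let ?b = "r @ [0]"
  have bV: "?b \<in> TN_verts N" using child_in_V[OF r, of 0] N by (auto simp: letters_def)
  let ?S = "Sset N r n"
  let ?P = "(\<lambda>z. (butlast z, z)) ` Dv N ?b n"
  have sub: "?P \<subseteq> ?S"
  proof
    fix p assume "p \<in> ?P"
    then obtain z w where p: "p = (butlast z, z)" and zV: "z \<in> TN_verts N" and zw: "z = ?b @ w" and wl: "length w = n"
      by (auto simp: Dv_def)
    have z2: "z = r @ (0 # w)" using zw by simp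
    have bz: "butlast z = r @ butlast (0 # w)" using z2 by (simp add: butlast_append)
    have bzV: "butlast z \<in> TN_verts N" using butlast_in_V[OF zV] .
    have "gdist (TN_adj N) r (butlast z) = length (butlast (0 # w))"
      using gdist_desc[of r "butlast (0 # w)" N] bzV bz by metis
    then have d1: "gdist (TN_adj N) r (butlast z) = n" using wl by (cases w) auto
    have d2: "gdist (TN_adj N) r z = Suc n" using gdist_desc[of r "0 # w" N] zV z2 wl by simp
    have "TN_adj N (butlast z) z" unfolding adj_iff using zV bzV z2 by simp
    then show "p \<in> ?S" using p d1 d2 zV bzV by (simp add: Sset_def)
  qed
  have "\<rho> ^ n * nu N \<rho> e ?b = (\<Sum>z\<in>Dv N ?b n. nu N \<rho> e z)"
    using Dv_sum[OF bV off N] by simp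
  also have "\<dots> = (\<Sum>z\<in>Dv N ?b n. muw N \<rho> e (butlast z) z)"
  proof (rule sum.cong[OF refl])
    fix z assume "z \<in> Dv N ?b n"
    then obtain w where zV: "z \<in> TN_verts N" and zw: "z = ?b @ w" by (auto simp: Dv_def)
    then have ne: "z \<noteq> []" by simp
    have "TN_adj N (butlast z) z" unfolding adj_iff using zV butlast_in_V[OF zV] ne by simp
    then show "nu N \<rho> e z = muw N \<rho> e (butlast z) z" using ne by (simp add: muw_def)
  qed
  also have "\<dots> = (\<Sum>(x, y)\<in>?P. muw N \<rho> e x y)"
    by (subst sum.reindex) (auto simp: inj_on_def)
  also have "\<dots> \<le> (\<Sum>(x, y)\<in>?S. muw N \<rho> e x y)"
  proof (rule sum_mono2[OF finite_Sset[OF r] sub])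
    fix p assume "p \<in> ?S - ?P"
    then show "0 \<le> (case p of (x, y) \<Rightarrow> muw N \<rho> e x y)"
      using nu_pos[of \<rho> N e] rho N by (auto simp: muw_def split: prod.splits intro: less_imp_le)
  qed
  finally show ?thesis unfolding W_eq .
qed

lemma muw_weight: "N \<ge> 2 \<Longrightarrow> \<rho> > 0 \<Longrightarrow> is_weight (TN_verts N) (TN_adj N) (muw N \<rho> e)"
  unfolding is_weight_def muw_def
  using nu_pos[of \<rho> N e] adj_sym[of N] adj_len[of N]
  by (auto intro: less_imp_le) (metis less_irrefl n_not_Suc_n)+



lemma powr_self_mult: fixes d m :: real shows "d > 0 \<Longrightarrow> d powr (m - 2) * d = d powr (m - 1)"
proof -
  assume d: "d > 0"
  have "d powr (m - 2) * d = d powr (m - 2) * d powr 1" using d by simp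
  also have "\<dots> = d powr ((m - 2) + 1)" by (rule powr_add[symmetric])
  also have "\<dots> = d powr (m - 1)" by simp
  finally show ?thesis .
qed

lemma aux_alg: "(k::real) > 0 \<Longrightarrow> C * (Q - R) / k + C * H = C / k * (Q + k * H - R)"
  by (simp add: field_simps)

lemma local_ineq:
  fixes \<mu> :: "'v \<Rightarrow> 'v \<Rightarrow> real" and u :: "'v \<Rightarrow> real"
  assumes fin: "finite Nb" and U: "U \<in> Nb" and ux: "u x > 0" and A: "A > 1"
    and uU: "u U = A * u x" and uC: "\<forall>y\<in>Nb - {U}. u y = u x / A"
    and wU: "\<mu> x U = wU" and wUp: "wU > 0" and wC: "(\<Sum>y\<in>Nb - {U}. \<mu> x y) = \<kappa> * wU" and kp: "\<kappa> \<ge> 0"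
    and key: "(A - 1) powr (m - 1) + (1 + \<kappa>) * sqrt (((A - 1)^2 + \<kappa> * (1 - 1/A)^2) / (2 * (1 + \<kappa>))) powr q
               \<le> \<kappa> * (1 - 1/A) powr (m - 1)"
    and pq: "p + q = m - 1"
  shows "(1 / (\<Sum>y\<in>Nb. \<mu> x y)) * (\<Sum>y\<in>Nb. \<mu> x y * (\<bar>u y - u x\<bar> powr (m - 2) * (u y - u x)))
           + u x powr p * sqrt (\<Sum>y\<in>Nb. \<mu> x y / (2 * (\<Sum>y\<in>Nb. \<mu> x y)) * (u y - u x)\<^sup>2) powr q \<le> 0"
    and "sqrt (\<Sum>y\<in>Nb. \<mu> x y / (2 * (\<Sum>y\<in>Nb. \<mu> x y)) * (u y - u x)\<^sup>2) > 0"
proof -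
  define c where "c = u x"
  define T where "T = A - 1"
  define s where "s = 1 - 1/A"
  have c: "c > 0" using ux c_def by simp
  have T: "T > 0" using A T_def by simp
  have "1 / A < 1" using A by simp
  then have s: "s > 0" using s_def by simp
  have dU: "u U - u x = T * c" unfolding T_def c_def using uU by (simp add: algebra_simps)
  have dC: "\<And>y. y \<in> Nb - {U} \<Longrightarrow> u y - u x = - (s * c)" unfolding s_def c_def using uC A by (simp add: field_simps)
  define vm where "vm = (\<Sum>y\<in>Nb. \<mu> x y)"
  have vm: "vm = (1 + \<kappa>) * wU"
    unfolding vm_def using sum.remove[OF fin U, of "\<mu> x"] wU wC by (simp add: algebra_simps)
  have vmp: "vm > 0" using vm kp wUp by simp
  have L: "(\<Sum>y\<in>Nb. \<mu> x y * (\<bar>u y - u x\<bar> powr (m - 2) * (u y - u x)))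
          = wU * (T * c) powr (m - 1) - \<kappa> * wU * (s * c) powr (m - 1)"
  proof -
    have "(\<Sum>y\<in>Nb. \<mu> x y * (\<bar>u y - u x\<bar> powr (m - 2) * (u y - u x)))
       = \<mu> x U * (\<bar>u U - u x\<bar> powr (m - 2) * (u U - u x))
         + (\<Sum>y\<in>Nb - {U}. \<mu> x y * (\<bar>u y - u x\<bar> powr (m - 2) * (u y - u x)))"
      by (rule sum.remove[OF fin U])
    also have "(\<Sum>y\<in>Nb - {U}. \<mu> x y * (\<bar>u y - u x\<bar> powr (m - 2) * (u y - u x)))
             = (\<Sum>y\<in>Nb - {U}. \<mu> x y * (- ((s * c) powr (m - 1))))"
    proof (rule sum.cong[OF refl])
      fix y assume y: "y \<in> Nb - {U}"
      have "\<bar>u y - u x\<bar> powr (m - 2) * (u y - u x) = - ((s * c) powr (m - 2) * (s * c))"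
        using dC[OF y] s c by simp
      then show "\<mu> x y * (\<bar>u y - u x\<bar> powr (m - 2) * (u y - u x)) = \<mu> x y * (- ((s * c) powr (m - 1)))"
        using powr_self_mult[of "s * c" m] s c by simp
    qed
    also have "\<dots> = - (\<kappa> * wU * (s * c) powr (m - 1))"
      using wC by (simp add: sum_negf sum_distrib_right[symmetric])
    also have "\<mu> x U * (\<bar>u U - u x\<bar> powr (m - 2) * (u U - u x)) = wU * (T * c) powr (m - 1)"
      using dU wU powr_self_mult[of "T * c" m] T c by simp
    finally show ?thesis by simp
  qed
  define G where "G = sqrt ((T^2 + \<kappa> * s^2) / (2 * (1 + \<kappa>)))"
  have "T^2 + \<kappa> * s^2 > 0" using T kp by (intro add_pos_nonneg) auto
  then have Gp: "G > 0" unfolding G_def using kp by (intro real_sqrt_gt_zero) auto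
  have Gr: "(\<Sum>y\<in>Nb. \<mu> x y / (2 * vm) * (u y - u x)\<^sup>2) = c^2 * ((T^2 + \<kappa> * s^2) / (2 * (1 + \<kappa>)))"
  proof -
    have "(\<Sum>y\<in>Nb. \<mu> x y / (2 * vm) * (u y - u x)\<^sup>2)
        = \<mu> x U / (2 * vm) * (u U - u x)\<^sup>2 + (\<Sum>y\<in>Nb - {U}. \<mu> x y / (2 * vm) * (u y - u x)\<^sup>2)"
      by (rule sum.remove[OF fin U])
    also have "(\<Sum>y\<in>Nb - {U}. \<mu> x y / (2 * vm) * (u y - u x)\<^sup>2) = (\<Sum>y\<in>Nb - {U}. \<mu> x y * ((s * c)\<^sup>2 / (2 * vm)))"
      by (rule sum.cong[OF refl]) (simp add: dC)
    also have "\<dots> = (\<Sum>y\<in>Nb - {U}. \<mu> x y) * ((s * c)\<^sup>2 / (2 * vm))"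
      by (rule sum_distrib_right[symmetric])
    also have "\<dots> = \<kappa> * wU * ((s * c)\<^sup>2 / (2 * vm))"
      using wC by simp
    finally have "(\<Sum>y\<in>Nb. \<mu> x y / (2 * vm) * (u y - u x)\<^sup>2) = wU / (2 * vm) * (T * c)\<^sup>2 + \<kappa> * wU * ((s * c)\<^sup>2 / (2 * vm))"
      using dU wU by simp
    also have "\<dots> = (wU / (2 * vm)) * ((T * c)\<^sup>2 + \<kappa> * (s * c)\<^sup>2)" by (simp add: algebra_simps)
    also have "wU / (2 * vm) = 1 / (2 * (1 + \<kappa>))" unfolding vm using wUp by simp
    also have "1 / (2 * (1 + \<kappa>)) * ((T * c)\<^sup>2 + \<kappa> * (s * c)\<^sup>2) = c^2 * ((T^2 + \<kappa> * s^2) / (2 * (1 + \<kappa>)))"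
      by (simp add: power_mult_distrib algebra_simps add_divide_distrib)
    finally show ?thesis .
  qed
  have sq: "sqrt (\<Sum>y\<in>Nb. \<mu> x y / (2 * vm) * (u y - u x)\<^sup>2) = c * G"
    unfolding Gr G_def using c by (simp only: real_sqrt_mult real_sqrt_abs abs_of_pos)
  show "sqrt (\<Sum>y\<in>Nb. \<mu> x y / (2 * (\<Sum>y\<in>Nb. \<mu> x y)) * (u y - u x)\<^sup>2) > 0"
    using sq[unfolded vm_def] c Gp by simp
  have P: "u x powr p * (c * G) powr q = c powr (m - 1) * G powr q"
    using c Gp pq by (simp add: c_def powr_mult powr_add[symmetric])
  have key': "T powr (m - 1) + (1 + \<kappa>) * G powr q \<le> \<kappa> * s powr (m - 1)"
    using key unfolding T_def s_def G_def .
  have "(1 / vm) * (wU * (T * c) powr (m - 1) - \<kappa> * wU * (s * c) powr (m - 1)) + c powr (m - 1) * G powr q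
      = c powr (m - 1) / (1 + \<kappa>) * (T powr (m - 1) + (1 + \<kappa>) * G powr q - \<kappa> * s powr (m - 1))"
  proof -
    have "wU * (T * c) powr (m - 1) - \<kappa> * wU * (s * c) powr (m - 1) = wU * (c powr (m - 1) * (T powr (m - 1) - \<kappa> * s powr (m - 1)))"
      using T s c by (simp add: powr_mult algebra_simps)
    then have "(1 / vm) * (wU * (T * c) powr (m - 1) - \<kappa> * wU * (s * c) powr (m - 1)) = c powr (m - 1) * (T powr (m - 1) - \<kappa> * s powr (m - 1)) / (1 + \<kappa>)"
      unfolding vm using wUp by simp
    moreover have "\<And>k C Q R H :: real. k > 0 \<Longrightarrow> C * (Q - R) / k + C * H = C / k * (Q + k * H - R)"
      by (simp add: field_simps)
    ultimately show ?thesis using kp by simp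
  qed
  also have "\<dots> \<le> 0"
    using key' c kp by (intro mult_nonneg_nonpos) auto
  finally show "(1 / (\<Sum>y\<in>Nb. \<mu> x y)) * (\<Sum>y\<in>Nb. \<mu> x y * (\<bar>u y - u x\<bar> powr (m - 2) * (u y - u x)))
           + u x powr p * sqrt (\<Sum>y\<in>Nb. \<mu> x y / (2 * (\<Sum>y\<in>Nb. \<mu> x y)) * (u y - u x)\<^sup>2) powr q \<le> 0"
    using L sq P unfolding vm_def by simp
qed



lemma muw_child: "x \<in> TN_verts N \<Longrightarrow> a \<in> letters N x \<Longrightarrow> muw N \<rho> e x (x @ [a]) = nu N \<rho> e (x @ [a])"
  unfolding muw_def TN_adj_def using child_in_V[of x N a] by auto

lemma muw_parent: "x \<in> TN_verts N \<Longrightarrow> x \<noteq> [] \<Longrightarrow> muw N \<rho> e x (butlast x) = nu N \<rho> e x"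
  unfolding muw_def adj_iff using butlast_in_V[of x N] by auto

lemma sum_children: "(\<Sum>y\<in>(\<lambda>a. x @ [a]) ` L. f y) = (\<Sum>a\<in>L. f (x @ [a]))"
  by (subst sum.reindex) (auto simp: inj_on_def)

lemma uu_unit: "uu A e [] = 1" by (simp add: uu_def)

lemma vertex_data:
  assumes x: "x \<in> TN_verts N" and N: "N \<ge> 2" and e: "e < N" and rho: "\<rho> \<ge> 2" and A: "A > 1"
  shows "\<exists>U wU \<kappa>. U \<in> nbrs (TN_verts N) (TN_adj N) x \<and> uu A e U = A * uu A e x
     \<and> (\<forall>y\<in>nbrs (TN_verts N) (TN_adj N) x - {U}. uu A e y = uu A e x / A)
     \<and> muw N \<rho> e x U = wU \<and> wU > 0
     \<and> (\<Sum>y\<in>nbrs (TN_verts N) (TN_adj N) x - {U}. muw N \<rho> e x y) = \<kappa> * wU \<and> \<rho> \<le> \<kappa> \<and> \<kappa> \<le> 2 * \<rho>"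
proof -
  let ?Nb = "nbrs (TN_verts N) (TN_adj N) x"
  let ?C = "(\<lambda>a. x @ [a]) ` letters N x"
  have Nb: "?Nb = ?C \<union> (if x = [] then {} else {butlast x})" by (rule nbrs_eq[OF x])
  have A0: "A > 0" using A by simp
  have rp: "\<rho> > 0" using rho by simp
  consider (off) "ri e x < length x" | (root) "x = []" | (on) "ri e x = length x" "x \<noteq> []"
    using ri_le[of e x] by fastforce
  then show ?thesis
  proof cases
    case off
    then have ne: "x \<noteq> []" by auto
    let ?U = "butlast x"
    have xe: "x = ?U @ [last x]" using ne by simp
    have neg: "\<not> (ri e ?U = length ?U \<and> last x = rl e ?U)"
    proof
      assume h: "ri e ?U = length ?U \<and> last x = rl e ?U"
      then have "ri e x = Suc (length ?U)" using ri_snoc[of e ?U "last x"] xe by simp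
      then show False using off ne by simp
    qed
    have "uu A e (?U @ [last x]) = uu A e ?U / A" by (rule trans[OF uu_snoc[OF A0] if_not_P[OF neg]])
    then have "uu A e x = uu A e ?U / A" using xe by metis
    then have uU: "uu A e ?U = A * uu A e x" using A0 by simp
    have "?U \<notin> ?C" by (auto dest: arg_cong[of _ _ length])
    then have NbU: "?Nb - {?U} = ?C" using Nb ne by auto
    have uC: "\<forall>y\<in>?Nb - {?U}. uu A e y = uu A e x / A"
      unfolding NbU using uu_snoc[OF A0, of e x] off by auto
    have "(\<Sum>y\<in>?Nb - {?U}. muw N \<rho> e x y) = (\<Sum>a\<in>letters N x. nu N \<rho> e (x @ [a]))"
      unfolding NbU sum_children using muw_child[OF x] by simp
    also have "\<dots> = \<rho> * nu N \<rho> e x" by (rule childsum_off[OF off N])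
    finally have S: "(\<Sum>y\<in>?Nb - {?U}. muw N \<rho> e x y) = \<rho> * nu N \<rho> e x" .
    show ?thesis
      apply (rule exI[of _ ?U], rule exI[of _ "nu N \<rho> e x"], rule exI[of _ \<rho>])
      using Nb ne uU uC muw_parent[OF x ne] nu_pos[OF rp N] S rho by auto
  next
    case root
    let ?U = "[e]"
    have Nb': "?Nb = (\<lambda>a. [a]) ` {..<N}" using Nb root by (simp add: letters_def)
    have U: "?U \<in> ?Nb" using Nb' e by auto
    have ri1: "ri e [e] = 1" by (simp add: ri_def)
    have uU: "uu A e ?U = A * uu A e x" using root uu_snoc[OF A0, of e "[]" e] by (simp add: rl_def uu_unit)
    have NbU: "?Nb - {?U} = (\<lambda>a. [] @ [a]) ` (letters N [] - {e})" using Nb' by (auto simp: letters_def)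
    have uC: "\<forall>y\<in>?Nb - {?U}. uu A e y = uu A e x / A"
      unfolding NbU using uu_snoc[OF A0, of e "[]"] root by (auto simp: rl_def uu_unit)
    have wU: "muw N \<rho> e x ?U = 1 / \<rho>"
      using muw_child[OF x, of e \<rho> e] root e by (simp add: letters_def nu_def ri1)
    have "(\<Sum>y\<in>?Nb - {?U}. muw N \<rho> e x y) = (\<Sum>a\<in>letters N [] - {e}. nu N \<rho> e ([] @ [a]))"
      unfolding NbU sum_children using muw_child[OF x] root by simp
    also have "\<dots> = (\<Sum>a\<in>letters N [] - {e}. 1 / real (N - 1))"
    proof (rule sum.cong[OF refl])
      fix a assume "a \<in> letters N [] - {e}"
      then show "nu N \<rho> e ([] @ [a]) = 1 / real (N - 1)" using nu_on_snoc[of e "[]" N \<rho> a] by (simp add: rl_def)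
    qed
    also have "\<dots> = 1" using N e by (simp add: letters_def)
    finally have S: "(\<Sum>y\<in>?Nb - {?U}. muw N \<rho> e x y) = \<rho> * (1 / \<rho>)" using rp by simp
    show ?thesis
      apply (rule exI[of _ ?U], rule exI[of _ "1 / \<rho>"], rule exI[of _ \<rho>])
      using U uU uC wU S rho by auto
  next
    case on
    let ?U = "x @ [0]"
    let ?B = "butlast x"
    have rl0: "rl e x = 0" using on by (simp add: rl_def)
    have l0: "0 \<in> letters N x" using N on by (simp add: letters_def)
    have U: "?U \<in> ?Nb" using Nb l0 by auto
    have uU: "uu A e ?U = A * uu A e x" using uu_snoc[OF A0, of e x 0] on rl0 by simp
    have xe: "x = ?B @ [last x]" using on by simp
    have cond: "ri e ?B = length ?B \<and> last x = rl e ?B"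
    proof (rule ccontr)
      assume "\<not> ?thesis"
      then have "ri e x = ri e ?B" using ri_snoc[of e ?B "last x"] xe by simp
      moreover have "length ?B < length x" using on(2) by simp
      ultimately show False using on(1) ri_le[of e ?B] by linarith
    qed
    then have uB: "uu A e ?B = uu A e x / A" using uu_snoc[OF A0, of e ?B "last x"] xe A0 by simp
    have Bnot: "?B \<notin> (\<lambda>a. x @ [a]) ` (letters N x - {0})" by (auto dest: arg_cong[of _ _ length])
    have "?B \<noteq> ?U" by (auto dest: arg_cong[of _ _ length])
    then have NbU: "?Nb - {?U} = insert ?B ((\<lambda>a. x @ [a]) ` (letters N x - {0}))" using Nb on by auto
    have uC: "\<forall>y\<in>?Nb - {?U}. uu A e y = uu A e x / A"
      unfolding NbU using uu_snoc[OF A0, of e x] uB rl0 by auto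
    have wU: "muw N \<rho> e x ?U = (1/\<rho>) ^ Suc (length x)"
      using muw_child[OF x l0, of \<rho> e] nu_on_snoc[OF on(1), of N \<rho> 0] rl0 by simp
    have "(\<Sum>y\<in>?Nb - {?U}. muw N \<rho> e x y) = muw N \<rho> e x ?B + (\<Sum>a\<in>letters N x - {0}. nu N \<rho> e (x @ [a]))"
      unfolding NbU using Bnot muw_child[OF x] by (simp add: sum_children)
    also have "(\<Sum>a\<in>letters N x - {0}. nu N \<rho> e (x @ [a])) = (\<Sum>a\<in>letters N x - {0}. (1/\<rho>) ^ length x / real (N - 1))"
    proof (rule sum.cong[OF refl])
      fix a assume "a \<in> letters N x - {0}"
      then show "nu N \<rho> e (x @ [a]) = (1/\<rho>) ^ length x / real (N - 1)" using nu_on_snoc[OF on(1), of N \<rho> a] rl0 by simp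
    qed
    also have "\<dots> = real (N - 2) * ((1/\<rho>) ^ length x / real (N - 1))"
      using l0 on by (simp add: card_Diff_singleton card_letters numeral_2_eq_2)
    also have "muw N \<rho> e x ?B = (1/\<rho>) ^ length x" using muw_parent[OF x on(2)] nu_on[OF on(1)] by simp
    finally have S: "(\<Sum>y\<in>?Nb - {?U}. muw N \<rho> e x y) = (\<rho> * (1 + real (N - 2) / real (N - 1))) * (1/\<rho>) ^ Suc (length x)"
      using rp by (simp add: field_simps)
    have k1: "real (N - 2) / real (N - 1) \<le> 1" using N by simp
    have k0: "0 \<le> real (N - 2) / real (N - 1)" by simp
    have kk: "\<rho> \<le> \<rho> * (1 + real (N - 2) / real (N - 1))" "\<rho> * (1 + real (N - 2) / real (N - 1)) \<le> 2 * \<rho>"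
    proof -
      have "\<rho> * (real (N - 2) / real (N - 1)) \<le> \<rho> * 1" by (rule mult_left_mono[OF k1]) (use rp in simp)
      moreover have "0 \<le> \<rho> * (real (N - 2) / real (N - 1))" using k0 rp by simp
      ultimately show "\<rho> \<le> \<rho> * (1 + real (N - 2) / real (N - 1))" "\<rho> * (1 + real (N - 2) / real (N - 1)) \<le> 2 * \<rho>"
        by (simp_all add: distrib_left)
    qed
    show ?thesis
      apply (rule exI[of _ ?U], rule exI[of _ "(1/\<rho>) ^ Suc (length x)"], rule exI[of _ "\<rho> * (1 + real (N - 2) / real (N - 1))"])
      using U uU uC wU S kk rp by auto
  qed
qed



definition KEY :: "real \<Rightarrow> real \<Rightarrow> real \<Rightarrow> real \<Rightarrow> bool" where
  "KEY m q A \<rho> \<longleftrightarrow> (\<forall>\<kappa>. \<rho> \<le> \<kappa> \<and> \<kappa> \<le> 2 * \<rho> \<longrightarrow>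
     (A - 1) powr (m - 1) + (1 + \<kappa>) * sqrt (((A - 1)^2 + \<kappa> * (1 - 1/A)^2) / (2 * (1 + \<kappa>))) powr q
               \<le> \<kappa> * (1 - 1/A) powr (m - 1))"

lemma params_qpos:
  fixes m q :: real
  assumes m: "m > 1" and q: "q > 0"
  shows "\<exists>A>1. \<exists>\<rho>\<ge>2. KEY m q A \<rho>"
proof -
  define c where "c = sqrt (3/4) powr q"
  have c0: "c \<ge> 0" unfolding c_def by simp
  have "sqrt (3/4) powr q < 1 powr q" by (rule powr_less_mono2[OF q]) auto
  then have c1: "c < 1" unfolding c_def by simp
  have lim0: "(\<lambda>n. inverse (real (Suc (Suc n)))) \<longlonglongrightarrow> 0"
    using LIMSEQ_Suc[OF LIMSEQ_inverse_real_of_nat] .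
  have "(\<lambda>n. (1 - inverse (real (Suc (Suc n)))) powr (m - 1)) \<longlonglongrightarrow> (1 - 0) powr (m - 1)"
    by (rule tendsto_powr[OF tendsto_diff[OF tendsto_const lim0] tendsto_const]) simp
  then have lim: "(\<lambda>n. (1 - inverse (real (Suc (Suc n)))) powr (m - 1)) \<longlonglongrightarrow> 1" by simp
  have "(1 + c) / 2 < 1" using c1 by simp
  from order_tendstoD(1)[OF lim this] obtain n where
    hn: "(1 + c) / 2 < (1 - inverse (real (Suc (Suc n)))) powr (m - 1)"
    unfolding eventually_sequentially by auto
  define A where "A = real (Suc (Suc n))"
  have A: "A > 1" unfolding A_def by simp
  define T where "T = A - 1"
  define s where "s = 1 - 1/A"
  have T: "T > 0" using A T_def by simp
  have "1/A < 1" "1/A > 0" using A by auto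
  then have s0: "s > 0" and s1: "s < 1" using s_def by auto
  have "s = 1 - inverse (real (Suc (Suc n)))" unfolding s_def A_def by (simp add: inverse_eq_divide)
  then have hs: "(1 + c) / 2 < s powr (m - 1)" using hn by simp
  define \<rho> where "\<rho> = max 2 (max (2 * T^2) (2 * (T powr (m - 1) + c) / (1 - c)))"
  have r2: "\<rho> \<ge> 2" unfolding \<rho>_def by simp
  have rT: "2 * T^2 \<le> \<rho>" unfolding \<rho>_def by simp
  have rc: "2 * (T powr (m - 1) + c) / (1 - c) \<le> \<rho>" unfolding \<rho>_def by simp
  have "KEY m q A \<rho>"
    unfolding KEY_def
  proof (intro allI impI)
    fix \<kappa> assume k: "\<rho> \<le> \<kappa> \<and> \<kappa> \<le> 2 * \<rho>"
    then have kp: "\<kappa> \<ge> 2" using r2 by simp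
    define G where "G = sqrt ((T^2 + \<kappa> * s^2) / (2 * (1 + \<kappa>)))"
    have "s^2 \<le> 1" using s0 s1 by (simp add: power_le_one)
    then have "\<kappa> * s^2 \<le> \<kappa>" using kp by (simp add: mult_left_le)
    moreover have "T^2 \<le> \<kappa> / 2" using rT k by simp
    ultimately have "T^2 + \<kappa> * s^2 \<le> 3/2 + 3/2 * \<kappa>" using kp by linarith
    then have "T^2 + \<kappa> * s^2 \<le> 3/4 * (2 * (1 + \<kappa>))" by (simp add: algebra_simps)
    then have "(T^2 + \<kappa> * s^2) / (2 * (1 + \<kappa>)) \<le> 3/4" using kp by (simp add: divide_le_eq)
    then have "G \<le> sqrt (3/4)" unfolding G_def by (rule real_sqrt_le_mono)
    moreover have "0 \<le> (T^2 + \<kappa> * s^2) / (2 * (1 + \<kappa>))" using kp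
      by (intro divide_nonneg_nonneg add_nonneg_nonneg mult_nonneg_nonneg) auto
    then have "0 \<le> G" unfolding G_def by simp
    ultimately have Gc: "G powr q \<le> c" unfolding c_def using q by (intro powr_mono2) auto
    have h2: "(1 - c) / 2 * \<kappa> \<ge> (1 - c) / 2 * \<rho>" using k c1 by (intro mult_left_mono) auto
    have h1: "(1 - c) / 2 * \<rho> \<ge> T powr (m - 1) + c"
    proof -
      have "2 * (T powr (m - 1) + c) \<le> \<rho> * (1 - c)"
        using rc c1 pos_divide_le_eq[of "1 - c" "2 * (T powr (m - 1) + c)" \<rho>] by linarith
      then have "T powr (m - 1) + c \<le> (\<rho> * (1 - c)) / 2" by simp
      also have "\<dots> = (1 - c) / 2 * \<rho>" by simp
      finally show ?thesis .
    qed
    have h3: "\<kappa> * (s powr (m - 1) - c) \<ge> \<kappa> * ((1 - c) / 2)" using hs kp by (intro mult_left_mono) auto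
    have "T powr (m - 1) + c + \<kappa> * c \<le> (1 - c) / 2 * \<kappa> + \<kappa> * c" using h1 h2 by linarith
    also have "\<dots> = \<kappa> * ((1 - c) / 2) + \<kappa> * c" by simp
    also have "\<dots> \<le> \<kappa> * (s powr (m - 1) - c) + \<kappa> * c" using h3 by linarith
    also have "\<dots> = \<kappa> * s powr (m - 1)" by (simp add: algebra_simps)
    finally have "\<kappa> * s powr (m - 1) \<ge> T powr (m - 1) + c + \<kappa> * c" .
    moreover have "(1 + \<kappa>) * G powr q \<le> (1 + \<kappa>) * c" using Gc kp by (intro mult_left_mono) auto
    ultimately show "(A - 1) powr (m - 1) + (1 + \<kappa>) * sqrt (((A - 1)^2 + \<kappa> * (1 - 1/A)^2) / (2 * (1 + \<kappa>))) powr q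
               \<le> \<kappa> * (1 - 1/A) powr (m - 1)"
      unfolding T_def[symmetric] s_def[symmetric] G_def[symmetric] by (simp add: distrib_right)
  qed
  then show ?thesis using A r2 by blast
qed



lemma params_qneg:
  fixes m q :: real
  assumes m: "m > 1" "m < 3" and q: "q < 0"
  shows "\<exists>A>1. \<exists>\<rho>\<ge>2. KEY m q A \<rho>"
proof -
  define K where "K = 16 powr (-2/q)"
  have K1: "K \<ge> 1" unfolding K_def using q by (intro ge_one_powr_ge_zero) (auto simp: divide_nonpos_neg)
  have Kq: "K powr (q/2) = 1/16"
  proof -
    have "K powr (q/2) = 16 powr (-2/q * (q/2))" unfolding K_def by (simp add: powr_powr)
    also have "-2/q * (q/2) = -1" using q by (simp add: field_simps)
    finally show ?thesis by (simp add: powr_minus_divide)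
  qed
  define T where "T = max 1 ((64 * K) powr (1 / (3 - m)))"
  have T1: "T \<ge> 1" unfolding T_def by simp
  have T0: "T > 0" using T1 by simp
  have TK: "T powr (3 - m) \<ge> 64 * K"
  proof -
    have "(64 * K) powr (1 / (3 - m)) \<le> T" unfolding T_def by simp
    then have "((64 * K) powr (1 / (3 - m))) powr (3 - m) \<le> T powr (3 - m)"
      using m by (intro powr_mono2) auto
    also have "((64 * K) powr (1 / (3 - m))) powr (3 - m) = 64 * K"
      using m K1 by (simp add: powr_powr)
    finally show ?thesis .
  qed
  have T2: "T^2 \<ge> T powr (3 - m)"
  proof -
    have "T powr (3 - m) \<le> T powr 2" using m T1 by (intro powr_mono) auto
    then show ?thesis using T0 by simp
  qed
  have Tsplit: "T^2 = T powr (3 - m) * T powr (m - 1)"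
  proof -
    have "T powr (3 - m) * T powr (m - 1) = T powr 2" using T0 by (simp add: powr_add[symmetric])
    then show ?thesis using T0 by simp
  qed
  define A where "A = T + 1"
  have A: "A > 1" using T0 A_def by simp
  have AT: "A - 1 = T" using A_def by simp
  define s where "s = 1 - 1/A"
  have s2: "s \<ge> 1/2" unfolding s_def A_def using T1 by (simp add: field_simps)
  have s1: "s \<le> 1" unfolding s_def A_def using T0 by simp
  define \<rho> where "\<rho> = T^2 / (8 * K)"
  have K0: "K > 0" using K1 by simp
  have r8: "\<rho> \<ge> 8"
  proof -
    have "T^2 \<ge> 64 * K" using T2 TK by linarith
    then show ?thesis unfolding \<rho>_def using K0 by (simp add: le_divide_eq)
  qed
  have rT: "\<rho> \<ge> 8 * T powr (m - 1)"
  proof -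
    have "T^2 \<ge> 64 * K * T powr (m - 1)" unfolding Tsplit using TK by (intro mult_right_mono) auto
    then show ?thesis unfolding \<rho>_def using K0 by (simp add: le_divide_eq algebra_simps)
  qed
  have sm: "s powr (m - 1) \<ge> 1/4"
  proof -
    have "(1/2) powr (m - 1) \<le> s powr (m - 1)" using s2 m by (intro powr_mono2) auto
    moreover have "(1/2::real) powr 2 \<le> (1/2) powr (m - 1)" using m by (intro powr_mono') auto
    moreover have "(1/2::real) powr 2 = 1/4" by (simp add: power2_eq_square)
    ultimately show ?thesis by linarith
  qed
  have "KEY m q A \<rho>"
    unfolding KEY_def AT s_def[symmetric]
  proof (intro allI impI)
    fix \<kappa> assume k: "\<rho> \<le> \<kappa> \<and> \<kappa> \<le> 2 * \<rho>"
    then have kp: "\<kappa> \<ge> 8" using r8 by simp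
    define G where "G = sqrt ((T^2 + \<kappa> * s^2) / (2 * (1 + \<kappa>)))"
    have "K \<le> T^2 / (4 * \<kappa>)"
    proof -
      have "K = T^2 / (8 * \<rho>)" unfolding \<rho>_def using K0 T0 by simp
      also have "\<dots> \<le> T^2 / (4 * \<kappa>)" using k kp r8 by (intro divide_left_mono) auto
      finally show ?thesis .
    qed
    also have "T^2 / (4 * \<kappa>) \<le> T^2 / (2 * (1 + \<kappa>))" using kp by (intro divide_left_mono) auto
    also have "\<dots> \<le> (T^2 + \<kappa> * s^2) / (2 * (1 + \<kappa>))" using kp by (intro divide_right_mono) auto
    finally have KG: "K \<le> (T^2 + \<kappa> * s^2) / (2 * (1 + \<kappa>))" .
    then have "sqrt K \<le> G" unfolding G_def by (rule real_sqrt_le_mono)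
    then have "G powr q \<le> sqrt K powr q" using q K0 by (intro powr_mono2') auto
    also have "sqrt K powr q = K powr (q/2)" using K0 by (simp add: powr_half_sqrt[symmetric] powr_powr)
    finally have Gq: "G powr q \<le> 1/16" using Kq by simp
    have "T powr (m - 1) + (1 + \<kappa>) * G powr q \<le> \<kappa> / 8 + (1 + \<kappa>) * (1/16)"
      using rT k Gq kp by (intro add_mono mult_left_mono) auto
    also have "\<dots> \<le> \<kappa> / 4"
    proof -
      have "(1 + \<kappa>) * (1/16) = 1/16 + \<kappa> / 16" by (simp add: distrib_right)
      then show ?thesis using kp by linarith
    qed
    also have "\<dots> \<le> \<kappa> * s powr (m - 1)" using sm kp by simp
    finally show "T powr (m - 1) + (1 + \<kappa>) * sqrt ((T^2 + \<kappa> * s^2) / (2 * (1 + \<kappa>))) powr q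
               \<le> \<kappa> * s powr (m - 1)" unfolding G_def .
  qed
  moreover have "\<rho> \<ge> 2" using r8 by simp
  ultimately show ?thesis using A by blast
qed



theorem mainTheorem12:
  fixes N :: nat and m p q :: real and r :: "nat list"
  assumes "N \<ge> 2" and "r \<in> TN_verts N" and "m > 1"
    and "(p + q = m - 1 \<and> p \<ge> 0 \<and> q > 0) \<or> (p + q = m - 1 \<and> q < 0 \<and> m < 3)"
  shows "\<exists>lam>0. \<exists>\<mu>. is_weight (TN_verts N) (TN_adj N) \<mu> \<and>
           (\<exists>c>0. \<exists>C>0. \<forall>n\<ge>2. c * exp (lam * real n) \<le> W_fun (TN_verts N) (TN_adj N) \<mu> r n
                              \<and> W_fun (TN_verts N) (TN_adj N) \<mu> r n \<le> C * exp (lam * real n)) \<and>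
           (\<exists>u. nontrivial_pos_solution (TN_verts N) (TN_adj N) \<mu> m p q u)"
proof -
  note N = assms(1) and r = assms(2) and m = assms(3)
  have pq: "p + q = m - 1" using assms(4) by auto
  obtain A \<rho> where A: "A > 1" and rho: "\<rho> \<ge> 2" and key: "KEY m q A \<rho>"
    using assms(4) params_qpos[OF m] params_qneg[OF m] by blast
  define e where "e = (if r \<noteq> [] \<and> hd r = 1 then 0 else (1::nat))"
  have e: "e < N" using N unfolding e_def by auto
  have off: "ri e (r @ [0]) < length (r @ [0])"
  proof (cases "r = []")
    case True
    then show ?thesis by (simp add: ri_def e_def)
  next
    case False
    then have "ri e r = 0" unfolding ri_def e_def by auto
    then show ?thesis using ri_snoc[of e r 0] False by simp
  qed
  have rp: "\<rho> > 0" using rho by simp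
  define \<mu> where "\<mu> = muw N \<rho> e"
  define c where "c = nu N \<rho> e (r @ [0])"
  define C where "C = 2 * \<rho> ^ (length r + 1)"
  have c0: "c > 0" unfolding c_def by (rule nu_pos[OF rp N])
  have C0: "C > 0" unfolding C_def using rp by simp
  have ex: "\<And>n. exp (ln \<rho> * real n) = \<rho> ^ n"
    using rp by (simp add: mult.commute[of "ln \<rho>"] exp_of_nat_mult)
  have W: "\<forall>n\<ge>2. c * exp (ln \<rho> * real n) \<le> W_fun (TN_verts N) (TN_adj N) \<mu> r n
              \<and> W_fun (TN_verts N) (TN_adj N) \<mu> r n \<le> C * exp (ln \<rho> * real n)"
  proof (intro allI impI conjI)
    fix n :: nat
    show "c * exp (ln \<rho> * real n) \<le> W_fun (TN_verts N) (TN_adj N) \<mu> r n"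
      unfolding ex c_def \<mu>_def using W_lower[OF N rho r off, of n] by (simp add: mult.commute)
    have "W_fun (TN_verts N) (TN_adj N) \<mu> r n \<le> 2 * \<rho> ^ (length r + n + 1)"
      unfolding \<mu>_def by (rule W_upper[OF N e rho r])
    also have "\<dots> = C * \<rho> ^ n" unfolding C_def by (simp add: power_add)
    finally show "W_fun (TN_verts N) (TN_adj N) \<mu> r n \<le> C * exp (ln \<rho> * real n)" unfolding ex .
  qed
  have lam: "ln \<rho> > 0" using rho by simp
  have wt: "is_weight (TN_verts N) (TN_adj N) \<mu>" unfolding \<mu>_def by (rule muw_weight[OF N rp])
  define u where "u = uu A e"
  have A0: "A > 0" using A by simp
  have pt: "\<And>x. x \<in> TN_verts N \<Longrightarrow> grad_norm (TN_verts N) (TN_adj N) \<mu> u x > 0 \<and>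
        m_laplacian (TN_verts N) (TN_adj N) \<mu> m u x + u x powr p * grad_norm (TN_verts N) (TN_adj N) \<mu> u x powr q \<le> 0"
  proof -
    fix x assume x: "x \<in> TN_verts N"
    obtain U wU \<kappa> where U: "U \<in> nbrs (TN_verts N) (TN_adj N) x" and uU: "uu A e U = A * uu A e x"
      and uC: "\<forall>y\<in>nbrs (TN_verts N) (TN_adj N) x - {U}. uu A e y = uu A e x / A"
      and wU: "muw N \<rho> e x U = wU" and wUp: "wU > 0"
      and S: "(\<Sum>y\<in>nbrs (TN_verts N) (TN_adj N) x - {U}. muw N \<rho> e x y) = \<kappa> * wU"
      and k: "\<rho> \<le> \<kappa>" "\<kappa> \<le> 2 * \<rho>"
      using vertex_data[OF x N e rho A] by blast
    have fin: "finite (nbrs (TN_verts N) (TN_adj N) x)" using nbrs_eq[OF x] by simp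
    have kk: "(A - 1) powr (m - 1) + (1 + \<kappa>) * sqrt (((A - 1)^2 + \<kappa> * (1 - 1/A)^2) / (2 * (1 + \<kappa>))) powr q
               \<le> \<kappa> * (1 - 1/A) powr (m - 1)" using key k unfolding KEY_def by blast
    have kp: "\<kappa> \<ge> 0" using k rp by simp
    note L = local_ineq[where u="uu A e" and x=x and \<mu>="muw N \<rho> e" and Nb="nbrs (TN_verts N) (TN_adj N) x", OF fin U uu_pos[OF A0, of e x] A uU uC wU wUp S kp kk pq]
    show "grad_norm (TN_verts N) (TN_adj N) \<mu> u x > 0 \<and>
        m_laplacian (TN_verts N) (TN_adj N) \<mu> m u x + u x powr p * grad_norm (TN_verts N) (TN_adj N) \<mu> u x powr q \<le> 0"
      unfolding m_laplacian_def grad_norm_def vmeasure_def u_def \<mu>_def using L by simp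
  qed
  have sol: "nontrivial_pos_solution (TN_verts N) (TN_adj N) \<mu> m p q u"
    unfolding nontrivial_pos_solution_def
  proof (intro conjI ballI)
    fix x assume "x \<in> TN_verts N"
    show "u x > 0" unfolding u_def by (rule uu_pos[OF A0])
  next
    have "[] \<in> TN_verts N" by (simp add: TN_verts_def)
    moreover have "[e] \<in> TN_verts N" using e by (simp add: TN_verts_def)
    moreover have "u [] \<noteq> u [e]"
    proof -
      have "u [e] = A" unfolding u_def using A by (simp add: uu_def ri_def power2_eq_square)
      moreover have "u [] = 1" unfolding u_def by (simp add: uu_def)
      ultimately show ?thesis using A by simp
    qed
    ultimately show "\<exists>x\<in>TN_verts N. \<exists>y\<in>TN_verts N. u x \<noteq> u y" by blast
  next
    fix x assume "x \<in> TN_verts N"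
    then show "q < 0 \<longrightarrow> grad_norm (TN_verts N) (TN_adj N) \<mu> u x > 0" using pt by blast
  next
    fix x assume "x \<in> TN_verts N"
    then show "m_laplacian (TN_verts N) (TN_adj N) \<mu> m u x + u x powr p * grad_norm (TN_verts N) (TN_adj N) \<mu> u x powr q \<le> 0" using pt by blast
  qed
  show ?thesis using lam wt W sol c0 C0 by blast
qed

end
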